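(* Let $d \geq 3$ and let \[ H(\mathbf{x}) = \left(\prod_{i=1}^d (1-x_i)\right)\left(1 - \sum_{i=2}^d (i-1)\, e_i(\mathbf{x})\right), \qquad \mathbf{x}=(x_1,\ldots,x_d)\in\mathbb{C}^d, \] where $e_i$ is the $i$th elementary symmetric polynomial in $x_1,\ldots,x_d$. Let $\mathcal{V} = \{\mathbf{x} \in \mathbb{C}^d : H(\mathbf{x}) = 0\}$ and $\mathbf{c} = \left(\frac{1}{d-1}, \ldots, \frac{1}{d-1}\right) \in \mathbb{C}^d$. Then $\mathbf{c}$ is a strictly minimal point of $\mathcal{V}$.
   Context: For $\mathbf{x}\in\mathbb{C}^d$, the polydisk is $\mathbf{D}(\mathbf{x}) = \{\mathbf{x}' : |x_i'| \le |x_i| \text{ for all } i\}$ and the torus is $\mathbf{T}(\mathbf{x}) = \{\mathbf{x}' : |x_i'| = |x_i| \text{ for all } i\}$. A point $\mathbf{x}\in\mathcal{V}$ is minimal if all its coordinates are nonzero and $\mathcal{V}\cap\mathbf{D}(\mathbf{x}) \subset \mathbf{T}(\mathbf{x})$; it is strictly minimal if it is minimal and it is the only point of $\mathcal{V}$ in $\mathbf{T}(\mathbf{x})$. *)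

theory Defs
  imports "HOL-Analysis.Analysis"
begin

text \<open>Points of C^d are vectors of type complex ^ 'n with d = CARD('n).\<close>

definition polydisk :: "complex ^ 'n \<Rightarrow> (complex ^ 'n) set" where
  "polydisk x = {x'. \<forall>i. norm (x' $ i) \<le> norm (x $ i)}"

definition torus :: "complex ^ 'n \<Rightarrow> (complex ^ 'n) set" where
  "torus x = {x'. \<forall>i. norm (x' $ i) = norm (x $ i)}"

definition minimal_point :: "(complex ^ 'n) set \<Rightarrow> complex ^ 'n \<Rightarrow> bool" where
  "minimal_point V x \<longleftrightarrow> x \<in> V \<and> (\<forall>i. x $ i \<noteq> 0) \<and> V \<inter> polydisk x \<subseteq> torus x"

definition strictly_minimal_point :: "(complex ^ 'n) set \<Rightarrow> complex ^ 'n \<Rightarrow> bool" where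
  "strictly_minimal_point V x \<longleftrightarrow> minimal_point V x \<and> V \<inter> torus x = {x}"

definition elem_sym :: "nat \<Rightarrow> complex ^ 'n \<Rightarrow> complex" where
  "elem_sym k x = (\<Sum>S \<in> {S :: 'n set. card S = k}. \<Prod>j\<in>S. x $ j)"

definition Hpoly :: "complex ^ 'n \<Rightarrow> complex" where
  "Hpoly x = (\<Prod>i\<in>UNIV. 1 - x $ i) *
     (1 - (\<Sum>i = 2..CARD('n). of_nat (i - 1) * elem_sym i x))"

end

theory Submission
  imports Defs
begin

lemma sum_by_card:
  fixes x :: "complex^'n" and f :: "nat \<Rightarrow> complex"
  shows "(\<Sum>i=0..CARD('n). f i * elem_sym i x) = (\<Sum>S\<in>(UNIV::'n set set). f (card S) * (\<Prod>j\<in>S. x$j))"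
proof -
  have "(\<Sum>S\<in>(UNIV::'n set set). f (card S) * (\<Prod>j\<in>S. x$j)) = (\<Sum>i\<in>{0..CARD('n)}. \<Sum>S\<in>{S. S\<in>UNIV \<and> card S = i}. f (card S) * (\<Prod>j\<in>S. x$j))"
    by (rule sum.group[symmetric]) (auto intro: card_mono simp: card_mono)
  also have "\<dots> = (\<Sum>i=0..CARD('n). f i * elem_sym i x)"
    by (rule sum.cong) (auto simp: elem_sym_def sum_distrib_left)
  finally show ?thesis ..
qed

lemma elem_sym_0: "elem_sym 0 (x::complex^'n) = 1"
proof -
  have "{S::'n set. card S = 0} = {{}}" by auto
  thus ?thesis by (simp add: elem_sym_def)
qed

lemma G_sets:
  "1 - (\<Sum>i = 2..CARD('n). of_nat (i - 1) * elem_sym i (x::complex^'n)) = (\<Sum>S\<in>UNIV. (1 - of_nat (card S)) * (\<Prod>j\<in>S. x$j))"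
proof -
  have n1: "1 \<le> CARD('n)" by (simp add: Suc_leI)
  have "(\<Sum>S\<in>UNIV. (1 - of_nat (card S)) * (\<Prod>j\<in>S. x$j)) = (\<Sum>i=0..CARD('n). (1 - of_nat i) * elem_sym i x)"
    by (rule sum_by_card[symmetric])
  also have "\<dots> = 1 + (\<Sum>i=2..CARD('n). (1 - of_nat i) * elem_sym i x)"
    using n1 by (simp add: sum.atLeast_Suc_atMost elem_sym_0 numeral_2_eq_2)
  also have "(\<Sum>i=2..CARD('n). (1 - of_nat i) * elem_sym i x) = - (\<Sum>i=2..CARD('n). of_nat (i - 1) * elem_sym i x)"
    by (simp add: sum_negf[symmetric], rule sum.cong) (auto simp: of_nat_diff algebra_simps)
  finally show ?thesis by simp
qed

lemma sum_pow: "(\<Sum>S\<in>(UNIV::'n::finite set set). \<Prod>j\<in>S. x$j) = (\<Prod>j\<in>UNIV. 1 + (x::complex^'n)$j)"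
  using prod_add[of "UNIV::'n set" "\<lambda>j. x$j" "\<lambda>_. 1"] by (simp add: add.commute)

lemma sum_contain:
  fixes x :: "complex^'n"
  shows "(\<Sum>S\<in>{S. j\<in>S}. \<Prod>k\<in>S. x$k) = x$j * (\<Prod>k\<in>UNIV-{j}. 1 + x$k)"
proof -
  have inj: "inj_on (insert j) (Pow (UNIV-{j}))"
    by (rule inj_onI) (auto simp: insert_ident)
  have im: "insert j ` Pow (UNIV-{j}) = {S. j\<in>S}"
  proof
    show "{S. j\<in>S} \<subseteq> insert j ` Pow (UNIV-{j})"
    proof
      fix S assume "S \<in> {S. j\<in>S}"
      hence "S = insert j (S-{j})" by auto
      thus "S \<in> insert j ` Pow (UNIV-{j})" by blast
    qed
  qed auto
  have "(\<Sum>S\<in>{S. j\<in>S}. \<Prod>k\<in>S. x$k) = (\<Sum>B\<in>Pow (UNIV-{j}). \<Prod>k\<in>insert j B. x$k)"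
    by (subst im[symmetric], subst sum.reindex[OF inj]) simp
  also have "\<dots> = (\<Sum>B\<in>Pow (UNIV-{j}). x$j * (\<Prod>k\<in>B. x$k))"
    by (rule sum.cong) (auto simp: finite_subset subset_iff intro!: prod.insert)
  also have "\<dots> = x$j * (\<Prod>k\<in>UNIV-{j}. 1 + x$k)"
    using prod_add[of "UNIV-{j}" "\<lambda>k. x$k" "\<lambda>_. 1"] by (simp add: sum_distrib_left[symmetric] add.commute)
  finally show ?thesis .
qed

lemma sum_card_pow:
  fixes x :: "complex^'n"
  shows "(\<Sum>S\<in>(UNIV::'n set set). of_nat (card S) * (\<Prod>j\<in>S. x$j)) = (\<Sum>j\<in>UNIV. x$j * (\<Prod>k\<in>UNIV-{j}. 1 + x$k))"
proof -
  have "(\<Sum>S\<in>(UNIV::'n set set). of_nat (card S) * (\<Prod>j\<in>S. x$j)) = (\<Sum>S\<in>(UNIV::'n set set). \<Sum>j\<in>UNIV. if j\<in>S then (\<Prod>k\<in>S. x$k) else 0)"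
    by (rule sum.cong) (auto simp: sum.If_cases)
  also have "\<dots> = (\<Sum>j\<in>UNIV. \<Sum>S\<in>(UNIV::'n set set). if j\<in>S then (\<Prod>k\<in>S. x$k) else 0)"
    by (rule sum.swap)
  also have "\<dots> = (\<Sum>j\<in>UNIV. \<Sum>S\<in>{S. j\<in>S}. (\<Prod>k\<in>S. x$k))"
    by (rule sum.cong) (auto simp: sum.If_cases)
  also have "\<dots> = (\<Sum>j\<in>UNIV. x$j * (\<Prod>k\<in>UNIV-{j}. 1 + x$k))"
    by (simp add: sum_contain)
  finally show ?thesis .
qed

lemma Hpoly_formula:
  fixes x :: "complex^'n"
  assumes "\<And>j. 1 + x$j \<noteq> 0"
  shows "Hpoly x = (\<Prod>i\<in>UNIV. 1 - x$i) * ((\<Prod>j\<in>UNIV. 1 + x$j) * (1 - (\<Sum>j\<in>UNIV. x$j / (1 + x$j))))"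
proof -
  define P where "P = (\<Prod>j\<in>UNIV. 1 + x$j)"
  have rem: "x$j * (\<Prod>k\<in>UNIV-{j}. 1 + x$k) = P * (x$j / (1 + x$j))" for j
  proof -
    have "P = (1 + x$j) * (\<Prod>k\<in>UNIV-{j}. 1 + x$k)"
      unfolding P_def by (rule prod.remove) auto
    thus ?thesis using assms[of j] by (simp add: field_simps)
  qed
  have "1 - (\<Sum>i = 2..CARD('n). of_nat (i - 1) * elem_sym i x) = P - P * (\<Sum>j\<in>UNIV. x$j / (1 + x$j))"
    unfolding G_sets
    by (simp add: left_diff_distrib sum_subtractf sum_pow sum_card_pow rem sum_distrib_left P_def)
  thus ?thesis unfolding Hpoly_def P_def by (simp add: right_diff_distrib)
qed

lemma re_bound:
  fixes z :: complex and r :: real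
  assumes r0: "0 < r" and r1: "r < 1" and nz: "norm z \<le> r"
  shows "Re (z / (1 + z)) \<le> r / (1 + r)"
    and "Re (z / (1 + z)) = r / (1 + r) \<Longrightarrow> z = of_real r"
proof -
  define a where "a = Re z"
  define b where "b = Im z"
  have s: "a^2 + b^2 \<le> r^2"
  proof -
    have "sqrt (a^2+b^2) \<le> r" using nz by (simp add: cmod_def a_def b_def)
    hence "sqrt (a^2+b^2)^2 \<le> r^2" by (rule power_mono) simp
    thus ?thesis by simp
  qed
  have "a^2 \<le> r^2" using s by (smt (verit) zero_le_power2)
  hence "\<bar>a\<bar> \<le> \<bar>r\<bar>" by (simp add: abs_le_square_iff)
  hence ar: "a \<le> r" and ar2: "-r \<le> a" using r0 by auto
  define D where "D = (1+a)^2 + b^2"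
  have "(1+a)^2 > 0" using ar2 r1 by simp
  hence D0: "D > 0" unfolding D_def by (smt (verit) zero_le_power2)
  have re: "Re (z / (1 + z)) = (a*(1+a) + b*b) / D"
    by (simp add: Re_divide D_def a_def b_def power2_eq_square)
  have key: "(a*(1+a) + b*b) * (1 + r) \<le> r * D"
  proof -
    have "a*(1-r) \<le> r*(1-r)" using ar r1 by (simp add: mult_right_mono)
    thus ?thesis using s unfolding D_def by (simp add: algebra_simps power2_eq_square)
  qed
  show "Re (z / (1 + z)) \<le> r / (1 + r)"
    unfolding re using key D0 r0 by (simp add: divide_simps mult.commute)
  assume eq: "Re (z / (1 + z)) = r / (1 + r)"
  hence eq2: "(a*(1+a) + b*b) * (1 + r) = r * D"
    unfolding re using D0 r0 by (simp add: divide_simps mult.commute split: if_splits)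
  have lin: "a*(1-r) = r - (a^2+b^2)" using eq2 unfolding D_def
    by (simp add: algebra_simps power2_eq_square)
  have "a*(1-r) \<le> r*(1-r)" using ar r1 by (simp add: mult_right_mono)
  hence "a^2 + b^2 \<ge> r^2" using lin by (simp add: algebra_simps power2_eq_square)
  hence ss: "a^2+b^2 = r^2" using s by simp
  hence "a*(1-r) = r*(1-r)" using lin by (simp add: algebra_simps power2_eq_square)
  hence ara: "a = r" using r1 by simp
  hence "b = 0" using ss by simp
  thus "z = of_real r" using ara by (simp add: complex_eq_iff a_def b_def)
qed


lemma key:
  fixes x :: "complex^'n"
  assumes d: "CARD('n) = d" "d \<ge> 3"
    and pd: "\<And>i. norm (x$i) \<le> 1/(real d - 1)"
    and H: "Hpoly x = 0"
  shows "\<And>i. x$i = of_real (1/(real d - 1))"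
proof -
  define r where "r = 1/(real d - 1)"
  have r0: "0 < r" using d by (simp add: r_def)
  have r1: "r < 1" using d by (simp add: r_def)
  have rr: "r/(1+r) = 1 / real d" using d unfolding r_def by (simp add: field_simps)
  have nx: "norm (x$i) < 1" for i using pd[of i] r1 unfolding r_def by linarith
  have p1: "1 + x$j \<noteq> 0" for j
  proof
    assume "1 + x$j = 0" hence "x$j = -1" by (simp add: add_eq_0_iff)
    thus False using nx[of j] by simp
  qed
  have m1: "1 - x$j \<noteq> 0" for j
  proof
    assume "1 - x$j = 0" hence "x$j = 1" by simp
    thus False using nx[of j] by simp
  qed
  have "(\<Prod>i\<in>UNIV. 1 - x$i) \<noteq> 0" using m1 by simp
  moreover have "(\<Prod>i\<in>UNIV. 1 + x$i) \<noteq> 0" using p1 by simp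
  ultimately have S: "(\<Sum>j\<in>UNIV. x$j / (1 + x$j)) = 1"
    using H Hpoly_formula[of x, OF p1] by simp
  hence SR: "(\<Sum>j\<in>UNIV. Re (x$j / (1 + x$j))) = 1"
    by (metis Re_sum one_complex.sel)
  have le: "Re (x$j / (1 + x$j)) \<le> 1 / real d" for j
    using re_bound(1)[OF r0 r1 pd[of j, folded r_def]] rr by simp
  have eqs: "Re (x$j / (1 + x$j)) = 1 / real d" for j
  proof (rule ccontr)
    assume ne: "Re (x$j / (1 + x$j)) \<noteq> 1 / real d"
    have "(\<Sum>j\<in>UNIV. Re (x$j / (1 + x$j))) < (\<Sum>j\<in>(UNIV::'n set). 1 / real d)"
      by (rule sum_strict_mono_ex1) (use le ne in \<open>auto intro: order.not_eq_order_implies_strict\<close>)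
    also have "\<dots> = 1" using d by simp
    finally show False using SR by simp
  qed
  fix i
  show "x$i = of_real (1/(real d - 1))"
    using re_bound(2)[OF r0 r1 pd[of i, folded r_def]] eqs[of i] rr unfolding r_def by simp
qed

theorem mainTheorem2:
  fixes d :: nat
  assumes "CARD('n::finite) = d" and "d \<ge> 3"
  shows "strictly_minimal_point {x :: complex ^ 'n. Hpoly x = 0}
           (\<chi> i. 1 / (of_nat d - 1))"
proof -
  define r where "r = 1/(real d - 1)"
  define c :: "complex^'n" where "c = (\<chi> i. 1 / (of_nat d - 1))"
  have cr: "c$i = of_real r" for i unfolding c_def r_def by simp
  have r0: "0 < r" using assms by (simp add: r_def)
  have r1: "r < 1" using assms by (simp add: r_def)
  have nc: "norm (c$i) = r" for i using cr r0 by simp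
  have Hc: "Hpoly c = 0"
  proof -
    have p1: "1 + c$j \<noteq> 0" for j
    proof
      assume "1 + c$j = 0" hence "c$j = -1" by (simp add: add_eq_0_iff)
      thus False using nc[of j] r1 by simp
    qed
    have w: "c$j / (1 + c$j) = 1 / of_nat d" for j
    proof -
      have "of_nat d - (1::complex) \<noteq> 0"
      proof
        assume "of_nat d - (1::complex) = 0" hence "(of_nat d::complex) = of_nat 1" by simp
        hence "d = 1" by (simp only: of_nat_eq_iff)
        thus False using assms by simp
      qed
      moreover have "(of_nat d::complex) \<noteq> 0" using assms by simp
      ultimately show ?thesis unfolding c_def by (simp add: field_simps)
    qed
    have "(\<Sum>j\<in>UNIV. c$j / (1 + c$j)) = 1" using assms by (simp add: w)
    thus ?thesis using Hpoly_formula[of c, OF p1] by simp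
  qed
  have sub: "x = c" if "x \<in> {x. Hpoly x = 0} \<inter> polydisk c" for x
  proof -
    have "\<And>i. norm (x$i) \<le> 1/(real d - 1)" using that nc unfolding polydisk_def r_def by auto
    from key[OF assms this] that have "\<And>i. x$i = c$i" using cr unfolding r_def by auto
    thus ?thesis by (simp add: vec_eq_iff)
  qed
  have tp: "torus c \<subseteq> polydisk c" unfolding torus_def polydisk_def by auto
  have ct: "c \<in> torus c" unfolding torus_def by simp
  have "strictly_minimal_point {x. Hpoly x = 0} c"
    unfolding strictly_minimal_point_def minimal_point_def
  proof (intro conjI)
    show "c \<in> {x. Hpoly x = 0}" using Hc by simp
    show "\<forall>i. c $ i \<noteq> 0" using cr r0 by simp
    show "{x. Hpoly x = 0} \<inter> polydisk c \<subseteq> torus c" using sub ct by blast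
    show "{x. Hpoly x = 0} \<inter> torus c = {c}" using sub tp ct Hc by blast
  qed
  thus ?thesis unfolding c_def .
qed

end
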